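(* Let $q=3^k$ for some $k\ge 1$, and pick $a,b,c,d\in\mathbb{F}_q$ with $ac\ne 0$. Then $f(X):=X^9+aX^5+bX^3+cX^2+dX$ does not permute $\mathbb{F}_q$. *)

theory Defs
  imports Main
begin

end

theory Submission
  imports Defs "HOL-Computational_Algebra.Polynomial"
begin


lemma card_zero_field: "(of_nat (card (UNIV::'a set)) :: 'a::{field,finite}) = 0"
proof -
  have b: "bij_betw (\<lambda>x::'a. x + 1) UNIV UNIV"
    by (rule bij_betw_byWitness[where f'="\<lambda>x. x - 1"]) auto
  have "(\<Sum>x\<in>UNIV. x + 1) = (\<Sum>x\<in>(UNIV::'a set). x)"
    using sum.reindex_bij_betw[OF b, of "\<lambda>x. x"] by simp
  then show ?thesis by (simp add: sum.distrib)
qed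

lemma three_zero:
  assumes "card (UNIV::'a set) = 3 ^ k"
  shows "(3::'a::{field,finite}) = 0"
proof -
  have "(of_nat (3^k) :: 'a) = 0" using card_zero_field[where 'a='a] assms by simp
  then have "(3::'a)^k = 0" by simp
  then show ?thesis by simp
qed

lemma unit_pow:
  fixes x :: "'a::{field,finite}"
  assumes "x \<noteq> 0"
  shows "x ^ (card (UNIV::'a set) - 1) = 1"
proof -
  let ?S = "UNIV - {0::'a}"
  have b: "bij_betw (\<lambda>y. x * y) ?S ?S"
    by (rule bij_betw_byWitness[where f'="\<lambda>y. y / x"]) (use assms in auto)
  have "(\<Prod>y\<in>?S. x * y) = (\<Prod>y\<in>?S. y)"
    using prod.reindex_bij_betw[OF b, of "\<lambda>y. y"] by simp
  moreover have "(\<Prod>y\<in>?S. x * y) = x ^ card ?S * (\<Prod>y\<in>?S. y)"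
    by (simp add: prod.distrib)
  moreover have "(\<Prod>y\<in>?S. y) \<noteq> 0" by simp
  moreover have "card ?S = card (UNIV::'a set) - 1" by (simp add: card_Diff_singleton)
  ultimately show ?thesis by simp
qed

lemma card_ge2: "card (UNIV::'a::{field,finite} set) \<ge> 2"
proof -
  have "{0::'a, 1} \<subseteq> UNIV" by simp
  then have "card {0::'a,1} \<le> card (UNIV::'a set)" by (rule card_mono[OF finite_UNIV])
  then show ?thesis by simp
qed

lemma sum_pow:
  fixes m :: nat
  shows "(\<Sum>x\<in>(UNIV::'a::{field,finite} set). x ^ m) =
         (if 0 < m \<and> (card (UNIV::'a set) - 1) dvd m then -1 else 0)"
proof (cases "m = 0")
  case True
  then show ?thesis using card_zero_field[where 'a='a] by simp
next
  case False
  let ?N = "card (UNIV::'a set) - 1"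
  have N: "?N \<ge> 1" using card_ge2[where 'a='a] by simp
  show ?thesis
  proof (cases "?N dvd m")
    case True
    then obtain s where s: "m = ?N * s" by blast
    have "\<And>x::'a. x \<noteq> 0 \<Longrightarrow> x ^ m = 1"
    proof -
      fix x :: 'a assume "x \<noteq> 0"
      then have "x ^ ?N = 1" by (rule unit_pow)
      then show "x ^ m = 1" by (simp add: s power_mult)
    qed
    then have "(\<Sum>x\<in>(UNIV::'a set). x ^ m) = (\<Sum>x\<in>(UNIV - {0::'a}). 1)"
    proof -
      have "(\<Sum>x\<in>UNIV. (x::'a) ^ m) = (\<Sum>x\<in>(UNIV - {0::'a}). x ^ m)"
        using False by (intro sum.mono_neutral_right) auto
      also have "\<dots> = (\<Sum>x\<in>(UNIV - {0::'a}). 1)"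
        using \<open>\<And>x. x \<noteq> 0 \<Longrightarrow> x ^ m = 1\<close> by (intro sum.cong) auto
      finally show ?thesis .
    qed
    also have "\<dots> = of_nat ?N" by (simp add: card_Diff_singleton)
    also have "\<dots> = -1"
    proof -
      have "(of_nat ?N :: 'a) = of_nat (card (UNIV::'a set)) - 1"
        using card_ge2[where 'a='a] by (simp add: of_nat_diff)
      then show ?thesis using card_zero_field[where 'a='a] by simp
    qed
    finally show ?thesis using True False by simp
  next
    case nd: False
    define r where "r = m mod ?N"
    have r0: "r > 0" using nd r_def by (simp add: dvd_eq_mod_eq_0)
    have rN: "r < ?N" using N r_def by simp
    have "\<exists>y::'a. y \<noteq> 0 \<and> y ^ r \<noteq> 1"
    proof (rule ccontr)
      assume "\<not> ?thesis"
      then have sub: "UNIV - {0::'a} \<subseteq> {x. poly (monom 1 r - 1) x = 0}"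
        by (auto simp: poly_monom)
      have ne: "(monom (1::'a) r - 1) \<noteq> 0"
      proof
        assume "monom (1::'a) r - 1 = 0"
        then have "coeff (monom (1::'a) r - 1) r = 0" by simp
        then show False using r0 by simp
      qed
      have "card (UNIV - {0::'a}) \<le> card {x. poly (monom (1::'a) r - 1) x = 0}"
        by (rule card_mono[OF finite_subset[OF subset_UNIV finite_UNIV] sub])
      also have "\<dots> \<le> degree (monom (1::'a) r - 1)" by (rule card_poly_roots_bound[OF ne])
      also have "\<dots> \<le> r"
        by (rule order.trans[OF degree_diff_le_max]) (simp add: degree_monom_eq)
      finally show False using rN by (simp add: card_Diff_singleton)
    qed
    then obtain y :: 'a where y: "y \<noteq> 0" "y ^ r \<noteq> 1" by blast
    have "m = ?N * (m div ?N) + r" using r_def by simp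
    then have ym: "y ^ m = y ^ r"
      by (metis power_add power_mult unit_pow[OF y(1)] power_one mult_1)
    have b: "bij_betw (\<lambda>x. y * x) (UNIV::'a set) UNIV"
      by (rule bij_betw_byWitness[where f'="\<lambda>x. x / y"]) (use y in auto)
    have "(\<Sum>x\<in>UNIV. x ^ m) = (\<Sum>x\<in>(UNIV::'a set). (y * x) ^ m)"
      using sum.reindex_bij_betw[OF b, of "\<lambda>x. x ^ m"] by simp
    also have "\<dots> = y ^ m * (\<Sum>x\<in>UNIV. x ^ m)"
      by (simp add: power_mult_distrib sum_distrib_left)
    finally have "(1 - y ^ m) * (\<Sum>x\<in>(UNIV::'a set). x ^ m) = 0"
      by (simp add: algebra_simps)
    then show ?thesis using y ym nd by simp
  qed
qed

lemma sum_poly: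
  fixes p :: "'a::{field,finite} poly"
  assumes "degree p < J * (card (UNIV::'a set) - 1)"
  shows "(\<Sum>x\<in>UNIV. poly p x) = - (\<Sum>j\<in>{1..<J}. coeff p (j * (card (UNIV::'a set) - 1)))"
proof -
  define N where "N = card (UNIV::'a set) - 1"
  have N: "N \<ge> 1" using card_ge2[where 'a='a] N_def by simp
  define M where "M = J * N"
  have dM: "degree p < M" using assms N_def M_def by simp
  have 1: "poly p x = (\<Sum>i<M. coeff p i * x ^ i)" for x
  proof -
    have "(\<Sum>i<M. coeff p i * x ^ i) = (\<Sum>i\<le>degree p. coeff p i * x ^ i)"
      by (rule sum.mono_neutral_right) (use dM in \<open>auto simp: coeff_eq_0\<close>)
    then show ?thesis by (simp add: poly_altdef)
  qed
  have "(\<Sum>x\<in>UNIV. poly p x) = (\<Sum>x\<in>(UNIV::'a set). \<Sum>i<M. coeff p i * x ^ i)"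
    by (simp add: 1)
  also have "\<dots> = (\<Sum>i<M. coeff p i * (\<Sum>x\<in>(UNIV::'a set). x ^ i))"
    by (subst sum.swap) (simp add: sum_distrib_left)
  also have "\<dots> = (\<Sum>i<M. if 0 < i \<and> N dvd i then - coeff p i else 0)"
    by (intro sum.cong) (auto simp: sum_pow N_def)
  also have "\<dots> = (\<Sum>i\<in>{i\<in>{..<M}. 0 < i \<and> N dvd i}. - coeff p i)"
    by (rule sum.inter_filter[symmetric]) simp
  also have "{i\<in>{..<M}. 0 < i \<and> N dvd i} = (\<lambda>j. j * N) ` {1..<J}"
  proof (rule set_eqI, rule iffI)
    fix i assume "i \<in> {i\<in>{..<M}. 0 < i \<and> N dvd i}"
    then obtain j where j: "i = N * j" "i < M" "0 < i" by auto
    then have "j < J" using M_def by (simp add: mult.commute)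
    moreover have "j \<ge> 1" using j by (cases j) auto
    ultimately show "i \<in> (\<lambda>j. j * N) ` {1..<J}" using j by (auto simp: mult.commute)
  next
    fix i assume "i \<in> (\<lambda>j. j * N) ` {1..<J}"
    then obtain j where "j \<in> {1..<J}" "i = j * N" by blast
    then show "i \<in> {i\<in>{..<M}. 0 < i \<and> N dvd i}" using N M_def by auto
  qed
  also have "(\<Sum>i\<in>(\<lambda>j. j * N) ` {1..<J}. - coeff p i) = (\<Sum>j\<in>{1..<J}. - coeff p (j * N))"
    by (rule sum.reindex_cong[where l="\<lambda>j. j * N"]) (use N in \<open>auto simp: inj_on_def\<close>)
  finally show ?thesis by (simp add: N_def sum_negf)
qed

lemma frob3:
  fixes x y :: "'a::comm_ring_1"
  assumes "(3::'a) = 0"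
  shows "(x + y) ^ 3 = x ^ 3 + y ^ 3"
proof -
  have "(x + y) ^ 3 = x ^ 3 + y ^ 3 + 3 * (x^2 * y + x * y^2)"
    by (simp add: power3_eq_cube power2_eq_square algebra_simps)
  then show ?thesis using assms by simp
qed

lemma frob:
  fixes x y :: "'a::comm_ring_1"
  assumes "(3::'a) = 0"
  shows "(x + y) ^ (3 ^ j) = x ^ (3 ^ j) + y ^ (3 ^ j)"
proof (induction j)
  case 0
  then show ?case by simp
next
  case (Suc j)
  have "(x + y) ^ (3 ^ Suc j) = ((x + y) ^ (3 ^ j)) ^ 3" by (simp add: power_mult[symmetric] mult.commute)
  also have "\<dots> = (x ^ (3 ^ j)) ^ 3 + (y ^ (3 ^ j)) ^ 3" using Suc frob3[OF assms] by simp
  also have "\<dots> = x ^ (3 ^ Suc j) + y ^ (3 ^ Suc j)" by (simp add: power_mult[symmetric] mult.commute)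
  finally show ?case .
qed

definition ff :: "'a::comm_ring_1 \<Rightarrow> 'a \<Rightarrow> 'a \<Rightarrow> 'a \<Rightarrow> 'a \<Rightarrow> 'a" where
  "ff a b c d x = x ^ 9 + a * x ^ 5 + b * x ^ 3 + c * x ^ 2 + d * x"

definition Fp :: "'a::comm_ring_1 \<Rightarrow> 'a \<Rightarrow> 'a \<Rightarrow> 'a \<Rightarrow> nat \<Rightarrow> 'a poly" where
  "Fp a b c d j = monom 1 (9 * 3 ^ j) + monom (a ^ 3 ^ j) (5 * 3 ^ j) + monom (b ^ 3 ^ j) (3 * 3 ^ j)
     + monom (c ^ 3 ^ j) (2 * 3 ^ j) + monom (d ^ 3 ^ j) (1 * 3 ^ j)"

lemma poly_Fp:
  fixes a b c d x :: "'a::comm_ring_1"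
  assumes "(3::'a) = 0"
  shows "poly (Fp a b c d j) x = (ff a b c d x) ^ (3 ^ j)"
  unfolding ff_def Fp_def
  by (simp add: frob[OF assms] poly_monom power_mult_distrib power_mult[symmetric] mult.commute)

definition vl :: "nat \<Rightarrow> 'a::comm_ring_1 poly \<Rightarrow> nat \<Rightarrow> nat \<Rightarrow> 'a" where
  "vl R X j D = (if D * 3 ^ j \<le> R then coeff X (R - D * 3 ^ j) else 0)"

lemma vl_monom: "vl R (monom c (e * 3 ^ j) * X) j D = c * vl R X j (D + e)"
proof -
  have dist: "(D + e) * 3 ^ j = D * 3 ^ j + e * 3 ^ j" by (simp add: add_mult_distrib)
  show ?thesis
    unfolding vl_def coeff_monom_mult dist by (auto simp: diff_diff_left)
qed

lemma vl_add: "vl R (X + Y) j D = vl R X j D + vl R Y j D"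
  by (simp add: vl_def)

lemma vl_Fp: "vl R (Fp a b c d j * X) j D = vl R X j (D + 9) + a ^ 3 ^ j * vl R X j (D + 5)
   + b ^ 3 ^ j * vl R X j (D + 3) + c ^ 3 ^ j * vl R X j (D + 2) + d ^ 3 ^ j * vl R X j (D + 1)"
  unfolding Fp_def distrib_right vl_add vl_monom by simp

lemma vl_one: "vl R (1::'a::comm_ring_1 poly) j D = (if D * 3 ^ j = R then 1 else 0)"
  by (auto simp: vl_def)

definition supp :: "nat \<Rightarrow> 'a::comm_ring_1 poly \<Rightarrow> bool" where
  "supp M X \<longleftrightarrow> (\<forall>m. coeff X m \<noteq> 0 \<longrightarrow> M dvd m)"

lemma supp_mult:
  assumes "supp M X" "supp M Y" shows "supp M (X * Y)"
  unfolding supp_def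
proof (intro allI impI)
  fix m assume "coeff (X * Y) m \<noteq> 0"
  then obtain i where i: "i \<le> m" "coeff X i * coeff Y (m - i) \<noteq> 0"
    unfolding coeff_mult by (meson atMost_iff sum.neutral)
  then have "coeff X i \<noteq> 0" "coeff Y (m - i) \<noteq> 0" by auto
  then have "M dvd i" "M dvd (m - i)" using assms unfolding supp_def by auto
  then have "M dvd (i + (m - i))" by (rule dvd_add)
  then show "M dvd m" using i by simp
qed

lemma supp_add: "supp M X \<Longrightarrow> supp M Y \<Longrightarrow> supp M (X + Y)"
  unfolding supp_def by (metis add.right_neutral coeff_add)

lemma supp_monom: "M dvd n \<Longrightarrow> supp M (monom c n)"
  by (auto simp: supp_def coeff_monom)

lemma supp_one: "supp M 1"
  by (auto simp: supp_def)

lemma supp_prod: "finite S \<Longrightarrow> (\<And>p. p \<in> S \<Longrightarrow> supp M (f p)) \<Longrightarrow> supp M (prod f S)"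
  by (induction S rule: finite_induct) (auto simp: supp_one supp_mult)

lemma supp_Fp: "i \<le> j \<Longrightarrow> supp (3 ^ i) (Fp a b c d j)"
proof -
  assume "i \<le> j"
  then have d: "3 ^ i dvd (e * 3 ^ j :: nat)" for e by (simp add: le_imp_power_dvd)
  show ?thesis unfolding Fp_def by (intro supp_add supp_monom d)
qed

lemma vl_desc:
  assumes "supp (3 ^ Suc j) X" "3 ^ Suc j dvd R"
  shows "vl R X j D = (if 3 dvd D then vl R X (Suc j) (D div 3) else 0)"
proof (cases "3 dvd D")
  case True
  then obtain D' where "D = 3 * D'" by blast
  then show ?thesis by (simp add: vl_def algebra_simps)
next
  case False
  have "vl R X j D = 0"
  proof (rule ccontr)
    assume ne: "vl R X j D \<noteq> 0"
    then have le: "D * 3 ^ j \<le> R" and c: "coeff X (R - D * 3 ^ j) \<noteq> 0"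
      by (auto simp: vl_def split: if_splits)
    then have "3 ^ Suc j dvd (R - D * 3 ^ j)" using assms(1) by (auto simp: supp_def)
    then have "3 ^ Suc j dvd (R - (R - D * 3 ^ j))" using assms(2) by (rule dvd_diff_nat[rotated])
    then have "3 * 3 ^ j dvd D * 3 ^ j" using le by simp
    then have "3 dvd D" by simp
    then show False using False by simp
  qed
  then show ?thesis using False by simp
qed

definition U :: "'a::comm_ring_1 \<Rightarrow> 'a \<Rightarrow> 'a \<Rightarrow> 'a \<Rightarrow> nat \<Rightarrow> nat \<Rightarrow> 'a poly" where
  "U a b c d k i = (\<Prod>p\<in>{i..<k-1}. Fp a b c d p)"

definition W :: "'a::comm_ring_1 \<Rightarrow> nat \<Rightarrow> nat \<Rightarrow> 'a" where
  "W a k i = (\<Prod>p\<in>{p\<in>{i..<k-1}. odd (k - 1 - p)}. a ^ 3 ^ p)"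

lemma supp_U: "i \<le> j \<Longrightarrow> supp (3 ^ i) (U a b c d k j)"
  unfolding U_def by (rule supp_prod) (auto intro: supp_Fp)

lemma U_step: "n < k - 1 \<Longrightarrow> U a b c d k n = Fp a b c d n * U a b c d k (Suc n)"
  unfolding U_def by (simp add: prod.atLeast_Suc_lessThan)

lemma W_step: "n < k - 1 \<Longrightarrow> W a k n = (if odd (k - 1 - n) then a ^ 3 ^ n * W a k (Suc n) else W a k (Suc n))"
proof -
  assume n: "n < k - 1"
  let ?S = "{p\<in>{Suc n..<k-1}. odd (k - 1 - p)}"
  show ?thesis
  proof (cases "odd (k - 1 - n)")
    case True
    then have e: "{p\<in>{n..<k-1}. odd (k - 1 - p)} = insert n ?S"
      using n by (auto simp: le_eq_less_or_eq)
    have "n \<notin> ?S" by simp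
    then show ?thesis unfolding W_def e using True by simp
  next
    case False
    then have e: "{p\<in>{n..<k-1}. odd (k - 1 - p)} = ?S"
      using n by (auto simp: le_eq_less_or_eq)
    show ?thesis unfolding W_def e using False by simp
  qed
qed

lemma tail_alg:
  fixes v :: "nat \<Rightarrow> 'a::comm_ring_1"
  assumes v1: "v 1 = 0" and v2: "v 2 = 0"
    and v3: "v 3 = (if P then 0 else W')" and v4: "v 4 = (if P then W' else 0)"
    and Wn: "Wn = (if P then W' else A * W')"
    and D: "D \<in> {1,2,3,4,5::nat}"
  shows "(if 3 dvd (D + 9) then v ((D + 9) div 3) else 0) + A * (if 3 dvd (D + 5) then v ((D + 5) div 3) else 0)
     + B * (if 3 dvd (D + 3) then v ((D + 3) div 3) else 0) + C * (if 3 dvd (D + 2) then v ((D + 2) div 3) else 0)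
     + E * (if 3 dvd (D + 1) then v ((D + 1) div 3) else 0) = (if D = (if P then 3 else 4) then Wn else 0)"
proof -
  consider "D = 1" | "D = 2" | "D = 3" | "D = 4" | "D = 5" using D by blast
  then show ?thesis
  proof cases
    case 1
    have n: "\<not> (3::nat) dvd Suc (Suc 0)" "(3::nat) dvd Suc (Suc (Suc 0))" "\<not> (3::nat) dvd Suc (Suc (Suc (Suc 0)))" by presburger+
    show ?thesis using 1 v1 v2 n by simp
  next
    case 2 then show ?thesis using v1 v2 by simp
  next
    case 3 then show ?thesis using v2 v4 Wn by simp
  next
    case 4 then show ?thesis using v2 v3 Wn by simp
  next
    case 5 then show ?thesis using v2 by simp
  qed
qed

lemma tail:
  assumes k: "k \<ge> 1" and i: "i \<le> k - 1"
  shows "\<forall>D\<in>{1,2,3,4,5}. vl (3 ^ k) (U a b c d k i) i D = (if D = (if even (k - 1 - i) then 3 else 4) then W a k i else 0)"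
  using i
proof (induction i rule: inc_induct)
  case base
  have e: "(3::nat) ^ k = 3 * 3 ^ (k - 1)" using k by (cases k) auto
  show ?case
    by (auto simp: U_def W_def vl_one e)
next
  case (step n)
  have IH: "\<And>D'. D' \<in> {1,2,3,4,5} \<Longrightarrow> vl (3 ^ k) (U a b c d k (Suc n)) (Suc n) D' =
      (if D' = (if even (k - 1 - Suc n) then 3 else 4) then W a k (Suc n) else 0)"
    using step.IH by blast
  have sp: "supp (3 ^ Suc n) (U a b c d k (Suc n))" by (rule supp_U) simp
  have dv: "3 ^ Suc n dvd (3::nat) ^ k" using step.hyps(2) by (intro le_imp_power_dvd) simp
  note desc = vl_desc[OF sp dv]
  have par: "even (k - 1 - n) \<longleftrightarrow> odd (k - 1 - Suc n)" using step.hyps(2) by (simp add: Suc_diff_Suc[symmetric])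
  show ?case
  proof
    fix D :: nat assume D: "D \<in> {1,2,3,4,5}"
    have "vl (3 ^ k) (U a b c d k n) n D = vl (3 ^ k) (U a b c d k (Suc n)) n (D + 9) + a ^ 3 ^ n * vl (3 ^ k) (U a b c d k (Suc n)) n (D + 5)
     + b ^ 3 ^ n * vl (3 ^ k) (U a b c d k (Suc n)) n (D + 3) + c ^ 3 ^ n * vl (3 ^ k) (U a b c d k (Suc n)) n (D + 2)
     + d ^ 3 ^ n * vl (3 ^ k) (U a b c d k (Suc n)) n (D + 1)"
      using step.hyps(2) by (simp add: U_step vl_Fp)
    also have "\<dots> = (if D = (if even (k - 1 - n) then 3 else 4) then W a k n else 0)"
    proof -
      define v where "v = (\<lambda>D'. vl (3 ^ k) (U a b c d k (Suc n)) (Suc n) D')"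
      have vv: "\<And>D'. D' \<in> {1,2,3,4,5} \<Longrightarrow> v D' = (if D' = (if even (k - 1 - n) then 4 else 3) then W a k (Suc n) else 0)"
        unfolding v_def using IH par by simp
      have v1: "v 1 = 0" "v 2 = 0" using vv[of 1] vv[of 2] by simp_all
      have v3: "v 3 = (if even (k - 1 - n) then 0 else W a k (Suc n))" using vv[of 3] by simp
      have v4: "v 4 = (if even (k - 1 - n) then W a k (Suc n) else 0)" using vv[of 4] by simp
      have Wn: "W a k n = (if even (k - 1 - n) then W a k (Suc n) else a ^ 3 ^ n * W a k (Suc n))"
        by (subst W_step[OF step.hyps(2)], cases "even (k - 1 - n)", simp_all only: if_True if_False not_True_eq_False not_False_eq_True)
      have dd: "\<And>D'. vl (3 ^ k) (U a b c d k (Suc n)) n D' = (if 3 dvd D' then v (D' div 3) else 0)"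
        unfolding v_def by (rule desc)
      show ?thesis unfolding dd
        by (rule tail_alg[OF v1 v3 v4 Wn D])
    qed
    finally show "vl (3 ^ k) (U a b c d k n) n D = (if D = (if even (k - 1 - n) then 3 else 4) then W a k n else 0)" .
  qed
qed

lemma geom3: "i \<le> n \<Longrightarrow> 2 * (\<Sum>p\<in>{i..<n}. (3::nat) ^ p) + 3 ^ i = 3 ^ n"
proof (induction n rule: dec_induct)
  case base then show ?case by simp
next
  case (step n) then show ?case by simp
qed

lemma degree_Fp: "degree (Fp a b c d j) \<le> 9 * 3 ^ j"
  unfolding Fp_def
  by (intro degree_add_le order.trans[OF degree_monom_le]) auto

lemma degree_U: "degree (U a b c d k i) \<le> (\<Sum>p\<in>{i..<k-1}. 9 * 3 ^ p)"
  unfolding U_def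
  by (rule order.trans[OF degree_prod_sum_le]) (auto intro: sum_mono degree_Fp)

lemma degree_U': "i \<le> k - 1 \<Longrightarrow> 2 * degree (U a b c d k i) + 9 * 3 ^ i \<le> 9 * 3 ^ (k - 1)"
proof -
  assume i: "i \<le> k - 1"
  have "2 * degree (U a b c d k i) \<le> 2 * (\<Sum>p\<in>{i..<k-1}. 9 * 3 ^ p)" using degree_U by simp
  also have "\<dots> = 9 * (2 * (\<Sum>p\<in>{i..<k-1}. 3 ^ p))" by (simp add: sum_distrib_left)
  finally show ?thesis using geom3[OF i] by simp
qed

lemma poly_U:
  fixes a b c d x :: "'a::comm_ring_1"
  assumes "(3::'a::comm_ring_1) = 0"
  shows "poly (U a b c d k i) x = ff a b c d x ^ (\<Sum>p\<in>{i..<k-1}. 3 ^ p)"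
  unfolding U_def poly_prod power_sum by (intro prod.cong refl poly_Fp assms)

lemma hermite:
  fixes a b c d :: "'a::{field,finite}"
  assumes "bij (ff a b c d)" "0 < t" "t < card (UNIV::'a set) - 1"
  shows "(\<Sum>x\<in>UNIV. ff a b c d x ^ t) = 0"
proof -
  have "(\<Sum>x\<in>UNIV. ff a b c d x ^ t) = (\<Sum>y\<in>(UNIV::'a set). y ^ t)"
    using sum.reindex_bij_betw[OF assms(1), of "\<lambda>y. y ^ t"] by simp
  also have "\<dots> = 0" using assms(2,3) by (auto simp: sum_pow dest: dvd_imp_le)
  finally show ?thesis .
qed

lemma hermite_poly:
  fixes a b c d :: "'a::{field,finite}" and P :: "'a poly"
  assumes "bij (ff a b c d)" "0 < t" "t < card (UNIV::'a set) - 1"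
    and "\<And>x. poly P x = ff a b c d x ^ t"
    and "degree P < J * (card (UNIV::'a set) - 1)"
    and "card (UNIV::'a set) = Q"
  shows "(\<Sum>j\<in>{1..<J}. vl (j * Q) P 0 j) = 0"
proof -
  have "(\<Sum>x\<in>UNIV. poly P x) = 0" using hermite[OF assms(1-3)] assms(4) by simp
  then have "(\<Sum>j\<in>{1..<J}. coeff P (j * (card (UNIV::'a set) - 1))) = 0"
    using sum_poly[OF assms(5)] by simp
  moreover have "vl (j * Q) P 0 j = coeff P (j * (card (UNIV::'a set) - 1))" for j
    using assms(6) card_ge2[where 'a='a] by (simp add: vl_def diff_mult_distrib2)
  ultimately show ?thesis by simp
qed

lemma two_ne: "(3::'a::field) = 0 \<Longrightarrow> (2::'a) \<noteq> 0"
proof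
  assume "(3::'a) = 0" "(2::'a) = 0"
  then have "(3::'a) - 2 = 0" by simp
  then show False by simp
qed

lemma W_ne: "(a::'a::field) \<noteq> 0 \<Longrightarrow> W a k i \<noteq> 0"
  by (simp add: W_def)

lemma caseA_coeff:
  fixes a b c d :: "'a::comm_ring_1"
  assumes k: "k \<ge> 3"
  shows "vl (3 ^ k) (Fp a b c d 0 * (Fp a b c d 0 * U a b c d k 1)) 0 1 =
     (if even k then 2 * a * b else 2 * c) * W a k 1"
proof -
  have sp: "supp (3 ^ Suc 0) (U a b c d k 1)" by (rule supp_U) simp
  have dv: "3 ^ Suc 0 dvd (3::nat) ^ k" using k by (intro le_imp_power_dvd) simp
  have dd: "\<And>D. vl (3 ^ k) (U a b c d k 1) 0 D = (if 3 dvd D then vl (3 ^ k) (U a b c d k 1) 1 (D div 3) else 0)"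
    using vl_desc[OF sp dv] by simp
  have tl: "\<And>D. D \<in> {1,2,3,4,5} \<Longrightarrow> vl (3 ^ k) (U a b c d k 1) 1 D = (if D = (if even k then 3 else 4) then W a k 1 else 0)"
  proof -
    fix D :: nat assume D: "D \<in> {1,2,3,4,5}"
    have "even (k - 1 - 1) = even k" using k by simp
    then show "?thesis D" using tail[of k 1 a b c d] k D by auto
  qed
  show ?thesis
    by (cases "even k") (simp_all add: vl_Fp dd tl del: One_nat_def)
qed

lemma caseA:
  fixes a b c d :: "'a::{field,finite}"
  assumes bij: "bij (ff a b c d)" and card: "card (UNIV::'a set) = 3 ^ k" and k: "k \<ge> 3"
    and a: "a \<noteq> 0" and bc: "if even k then b \<noteq> 0 else c \<noteq> 0"
  shows False
proof -
  have three: "(3::'a) = 0" using three_zero[OF card] .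
  define P where "P = Fp a b c d 0 * (Fp a b c d 0 * U a b c d k 1)"
  define S where "S = (\<Sum>p\<in>{1..<k-1}. (3::nat) ^ p)"
  define m where "m = (3::nat) ^ (k - 1)"
  have g: "2 * S + 3 = m" unfolding S_def m_def using geom3[of 1 "k - 1"] k by simp
  have m9: "m \<ge> 9"
  proof -
    have "(3::nat) ^ 2 \<le> 3 ^ (k - 1)" using k by (intro power_increasing) auto
    then show ?thesis by (simp add: m_def)
  qed
  have q: "(3::nat) ^ k = 3 * m" unfolding m_def using k by (cases k) auto
  have polyP: "poly P x = ff a b c d x ^ (2 + S)" for x
    unfolding P_def S_def by (simp add: poly_Fp[OF three] poly_U[OF three] power_add)
  have degP: "degree P < 2 * (card (UNIV::'a set) - 1)"
  proof -
    have "degree P \<le> 9 + (9 + degree (U a b c d k 1))"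
      unfolding P_def
      by (rule order.trans[OF degree_mult_le], rule add_mono[OF _ order.trans[OF degree_mult_le]])
         (use degree_Fp[of a b c d 0] in auto)
    moreover have "2 * degree (U a b c d k 1) + 27 \<le> 9 * m"
      using degree_U'[of 1 k a b c d] k unfolding m_def by simp
    ultimately show ?thesis using card q m9 by simp
  qed
  have t: "0 < 2 + S" "2 + S < card (UNIV::'a set) - 1" using card q g m9 by simp_all
  have "(\<Sum>j\<in>{1..<2}. vl (j * 3 ^ k) P 0 j) = 0"
    by (rule hermite_poly[OF bij t polyP degP card])
  then have "vl (3 ^ k) P 0 1 = 0" by (simp add: numeral_2_eq_2)
  then have "(if even k then 2 * a * b else 2 * c) * W a k 1 = 0"
    unfolding P_def caseA_coeff[OF k] .
  then show False using two_ne[OF three] W_ne[OF a] a bc by (auto split: if_splits)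
qed



lemma caseB_coeff:
  fixes a b c d :: "'a::comm_ring_1"
  assumes k: "k \<ge> 4" and ev: "even k" and b: "b = 0"
  shows "vl (3 ^ k) (Fp a b c d 0 * (Fp a b c d 1 * (Fp a b c d 2 * (Fp a b c d 2 * U a b c d k 3)))) 0 1 =
     c * (a ^ 3 * (2 * a ^ 9 * c ^ 9 * W a k 3))"
proof -
  define R where "R = (3::nat) ^ k"
  define U3 where "U3 = U a b c d k 3"
  define X2 where "X2 = Fp a b c d 2 * (Fp a b c d 2 * U3)"
  define X1 where "X1 = Fp a b c d 1 * X2"
  have dvR: "3 ^ Suc j dvd R" if "j \<le> 3" for j using k that unfolding R_def by (intro le_imp_power_dvd) simp
  have sp3: "supp (3 ^ Suc 2) U3" unfolding U3_def by (rule supp_U) simp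
  have dd3: "\<And>D. vl R U3 2 D = (if 3 dvd D then vl R U3 3 (D div 3) else 0)"
    using vl_desc[OF sp3 dvR[of 2]] by simp
  have tl3: "\<And>D. D \<in> {1,2,3,4,5} \<Longrightarrow> vl R U3 3 D = (if D = 3 then W a k 3 else 0)"
  proof -
    fix D :: nat assume D: "D \<in> {1,2,3,4,5}"
    have "even (k - 1 - 3)" using k ev by simp
    then show "?thesis D" using tail[of k 3 a b c d] k D unfolding R_def U3_def by auto
  qed
  have L2a: "vl R X2 2 1 = 0" unfolding X2_def using b by (simp add: vl_Fp dd3 tl3 del: One_nat_def)
  have L2b: "vl R X2 2 2 = 2 * a ^ 9 * c ^ 9 * W a k 3" unfolding X2_def using b
    by (simp add: vl_Fp dd3 tl3 del: One_nat_def)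
  have sp2: "supp (3 ^ Suc 1) X2" unfolding X2_def U3_def
    by (intro supp_mult supp_Fp supp_U) simp_all
  have dd2: "\<And>D. vl R X2 1 D = (if 3 dvd D then vl R X2 2 (D div 3) else 0)"
    using vl_desc[OF sp2 dvR[of 1]] by (simp add: numeral_2_eq_2)
  have L1a: "vl R X1 1 1 = a ^ 3 * (2 * a ^ 9 * c ^ 9 * W a k 3)" unfolding X1_def
    by (simp add: vl_Fp dd2 L2a L2b del: One_nat_def)
  have L1b: "vl R X1 1 2 = 0" unfolding X1_def
    by (simp add: vl_Fp dd2 L2a L2b del: One_nat_def)
  have sp1: "supp (3 ^ Suc 0) X1" unfolding X1_def X2_def U3_def
    by (intro supp_mult supp_Fp supp_U) simp_all
  have dd1: "\<And>D. vl R X1 0 D = (if 3 dvd D then vl R X1 1 (D div 3) else 0)"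
    using vl_desc[OF sp1 dvR[of 0]] by simp
  have "vl R (Fp a b c d 0 * X1) 0 1 = c * (a ^ 3 * (2 * a ^ 9 * c ^ 9 * W a k 3))"
    by (simp add: vl_Fp dd1 L1a L1b del: One_nat_def)
  then show ?thesis unfolding R_def X1_def X2_def U3_def .
qed

lemma caseB4_coeff:
  fixes a b c d :: "'a::comm_ring_1"
  shows "vl 162 (Fp a b c d 0 * (Fp a b c d 1 * (Fp a b c d 2 * (Fp a b c d 2 * U a b c d 4 3)))) 0 2 = 0"
proof -
  have U1: "U a b c d 4 3 = 1" by (simp add: U_def)
  define X2 where "X2 = Fp a b c d 2 * (Fp a b c d 2 * (1::'a poly))"
  define X1 where "X1 = Fp a b c d 1 * X2"
  have L2: "\<And>D. D \<in> {1,2} \<Longrightarrow> vl 162 X2 2 D = 0" unfolding X2_def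
    by (elim insertE; simp add: vl_Fp vl_Fp[where X=1, simplified] vl_one del: One_nat_def)
  have sp2: "supp (3 ^ Suc 1) X2" unfolding X2_def
    by (intro supp_mult supp_Fp supp_one) simp_all
  have dd2: "\<And>D. vl 162 X2 1 D = (if 3 dvd D then vl 162 X2 2 (D div 3) else 0)"
    using vl_desc[OF sp2, of 162] by (simp add: numeral_2_eq_2)
  have L1: "vl 162 X1 1 1 = 0" unfolding X1_def
    by (simp add: vl_Fp dd2 L2 del: One_nat_def)
  have sp1: "supp (3 ^ Suc 0) X1" unfolding X1_def X2_def
    by (intro supp_mult supp_Fp supp_one) simp_all
  have dd1: "\<And>D. vl 162 X1 0 D = (if 3 dvd D then vl 162 X1 1 (D div 3) else 0)"
    using vl_desc[OF sp1, of 162] by simp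
  have "vl 162 (Fp a b c d 0 * X1) 0 2 = 0"
    by (simp add: vl_Fp dd1 L1 del: One_nat_def)
  then show ?thesis unfolding U1 X1_def X2_def .
qed


lemma caseB:
  fixes a b c d :: "'a::{field,finite}"
  assumes bij: "bij (ff a b c d)" and card: "card (UNIV::'a set) = 3 ^ k" and k: "k \<ge> 4"
    and ev: "even k" and a: "a \<noteq> 0" and c: "c \<noteq> 0" and b: "b = 0"
  shows False
proof -
  have three: "(3::'a) = 0" using three_zero[OF card] .
  define P where "P = Fp a b c d 0 * (Fp a b c d 1 * (Fp a b c d 2 * (Fp a b c d 2 * U a b c d k 3)))"
  define S where "S = (\<Sum>p\<in>{3..<k-1}. (3::nat) ^ p)"
  define m where "m = (3::nat) ^ (k - 1)"
  have g: "2 * S + 27 = m" unfolding S_def m_def using geom3[of 3 "k - 1"] k by simp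
  have q: "(3::nat) ^ k = 3 * m" unfolding m_def using k by (cases k) auto
  have polyP: "poly P x = ff a b c d x ^ (22 + S)" for x
  proof -
    have "poly P x = ff a b c d x * (ff a b c d x ^ 3 * (ff a b c d x ^ 9 * (ff a b c d x ^ 9 * ff a b c d x ^ S)))"
      unfolding P_def S_def by (simp add: poly_Fp[OF three] poly_U[OF three])
    also have "\<dots> = ff a b c d x ^ (1 + 3 + 9 + 9 + S)" by (simp only: power_add power_one_right mult.assoc)
    also have "\<dots> = ff a b c d x ^ (22 + S)" by simp
    finally show ?thesis .
  qed
  have degP0: "degree P \<le> 9 + (27 + (81 + (81 + degree (U a b c d k 3))))"
    unfolding P_def
    by (intro order.trans[OF degree_mult_le] add_mono order.refl)
       (use degree_Fp[of a b c d 0] degree_Fp[of a b c d 1] degree_Fp[of a b c d 2] in auto)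
  have dU: "2 * degree (U a b c d k 3) + 243 \<le> 9 * m"
    using degree_U'[of 3 k a b c d] k unfolding m_def by simp
  have t: "0 < 22 + S" "22 + S < card (UNIV::'a set) - 1" using card q g by simp_all
  have main: "vl (3 ^ k) P 0 1 \<noteq> 0"
    unfolding P_def caseB_coeff[OF k ev b]
    using a c W_ne[OF a] two_ne[OF three] by simp
  show False
  proof (cases "k = 4")
    case True
    have m27: "m = 27" unfolding m_def True by simp
    have degP: "degree P < 3 * (card (UNIV::'a set) - 1)" using degP0 dU card q m27 by simp
    have "(\<Sum>j\<in>{1..<3}. vl (j * 3 ^ k) P 0 j) = 0"
      by (rule hermite_poly[OF bij t polyP degP card])
    moreover have "{1..<3::nat} = {1, 2}" by auto
    moreover have "vl (2 * 3 ^ k) P 0 2 = 0"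
      using caseB4_coeff[of a b c d] unfolding P_def True by simp
    ultimately have "vl (3 ^ k) P 0 1 = 0" by simp
    then show False using main by simp
  next
    case False
    then have "k \<ge> 6" using k ev by presburger
    then have "(3::nat) ^ 5 \<le> m" unfolding m_def by (intro power_increasing) auto
    then have degP: "degree P < 2 * (card (UNIV::'a set) - 1)" using degP0 dU card q by simp
    have "(\<Sum>j\<in>{1..<2}. vl (j * 3 ^ k) P 0 j) = 0"
      by (rule hermite_poly[OF bij t polyP degP card])
    then have "vl (3 ^ k) P 0 1 = 0" by (simp add: numeral_2_eq_2)
    then show False using main by simp
  qed
qed


lemma k2_sums:
  fixes a b c d :: "'a::comm_ring_1"
  shows "(\<Sum>j\<in>{1..<5}. vl (j * 9) (Fp a b c d 0 * Fp a b c d 1) 0 j) = a * d ^ 3 + c * c ^ 3 + (d * a ^ 3 + (a ^ 3 + a))"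
    and "(\<Sum>j\<in>{1..<6}. vl (j * 9) (Fp a b c d 0 * (Fp a b c d 0 * Fp a b c d 1)) 0 j) = 2 * (b * (c * d ^ 3)) + d * (d * c ^ 3) + (2 * (d * c ^ 3) + (a * (a * c ^ 3 + c * b ^ 3) + c * (a * b ^ 3)) + (c ^ 3 + 2 * (b * c)))"
proof -
  have sp: "supp (3 ^ Suc 0) (Fp a b c d 1)" by (rule supp_Fp) simp
  have dd: "\<And>R D. 3 dvd R \<Longrightarrow> vl R (Fp a b c d 1) 0 D = (if 3 dvd D then vl R (Fp a b c d 1) 1 (D div 3) else 0)"
    using vl_desc[OF sp] by simp
  have e5: "{1..<5::nat} = {1,2,3,4}" "{1..<6::nat} = {1,2,3,4,5}" by auto
  show "(\<Sum>j\<in>{1..<5}. vl (j * 9) (Fp a b c d 0 * Fp a b c d 1) 0 j) = a * d ^ 3 + c * c ^ 3 + (d * a ^ 3 + (a ^ 3 + a))"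
    unfolding e5 by (simp add: vl_Fp vl_Fp[where X=1, simplified] vl_one dd del: One_nat_def)
  show "(\<Sum>j\<in>{1..<6}. vl (j * 9) (Fp a b c d 0 * (Fp a b c d 0 * Fp a b c d 1)) 0 j) = 2 * (b * (c * d ^ 3)) + d * (d * c ^ 3) + (2 * (d * c ^ 3) + (a * (a * c ^ 3 + c * b ^ 3) + c * (a * b ^ 3)) + (c ^ 3 + 2 * (b * c)))"
    unfolding e5 by (simp add: vl_Fp vl_Fp[where X=1, simplified] vl_one dd del: One_nat_def)
qed


lemma k2_sum2:
  fixes a b c d :: "'a::comm_ring_1"
  shows "(\<Sum>j\<in>{1..<3}. vl (j * 9) (Fp a b c d 0 * Fp a b c d 0) 0 j) = 2 * (a * b)"
proof -
  have e3: "{1..<3::nat} = {1,2}" by auto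
  show ?thesis unfolding e3 by (simp add: vl_Fp vl_Fp[where X=1, simplified] vl_one del: One_nat_def)
qed


lemma case2:
  fixes a b c d :: "'a::{field,finite}"
  assumes bij: "bij (ff a b c d)" and card: "card (UNIV::'a set) = 9"
    and a: "a \<noteq> 0" and c: "c \<noteq> 0"
  shows False
proof -
  have three: "(3::'a) = 0" using three_zero[of 2] card by simp
  have dF0: "degree (Fp a b c d 0) \<le> 9" using degree_Fp[of a b c d 0] by simp
  have dF1: "degree (Fp a b c d 1) \<le> 27" using degree_Fp[of a b c d 1] by simp
  show False
  proof (cases "b = 0")
    case False
    have polyP: "poly (Fp a b c d 0 * Fp a b c d 0) x = ff a b c d x ^ 2" for x
      by (simp add: poly_Fp[OF three] power2_eq_square)
    have degP: "degree (Fp a b c d 0 * Fp a b c d 0) < 3 * (card (UNIV::'a set) - 1)"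
      using order.trans[OF degree_mult_le add_mono[OF dF0 dF0]] card by simp
    have "(\<Sum>j\<in>{1..<3}. vl (j * 9) (Fp a b c d 0 * Fp a b c d 0) 0 j) = 0"
      by (rule hermite_poly[OF bij _ _ polyP degP card]) (use card in simp_all)
    then have "2 * (a * b) = 0" unfolding k2_sum2 .
    then show False using two_ne[OF three] a False by simp
  next
    case True
    have polyP4: "poly (Fp a b c d 0 * Fp a b c d 1) x = ff a b c d x ^ 4" for x
    proof -
      have "poly (Fp a b c d 0 * Fp a b c d 1) x = ff a b c d x ^ 1 * ff a b c d x ^ 3"
        by (simp add: poly_Fp[OF three])
      also have "\<dots> = ff a b c d x ^ 4" by (simp only: power_add[symmetric]) simp
      finally show ?thesis .
    qed
    have degP4: "degree (Fp a b c d 0 * Fp a b c d 1) < 5 * (card (UNIV::'a set) - 1)"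
      using order.trans[OF degree_mult_le add_mono[OF dF0 dF1]] card by simp
    have "(\<Sum>j\<in>{1..<5}. vl (j * 9) (Fp a b c d 0 * Fp a b c d 1) 0 j) = 0"
      by (rule hermite_poly[OF bij _ _ polyP4 degP4 card]) (use card in simp_all)
    then have S4: "a * d ^ 3 + c * c ^ 3 + (d * a ^ 3 + (a ^ 3 + a)) = 0"
      unfolding k2_sums(1) .
    have polyP5: "poly (Fp a b c d 0 * (Fp a b c d 0 * Fp a b c d 1)) x = ff a b c d x ^ 5" for x
    proof -
      have "poly (Fp a b c d 0 * (Fp a b c d 0 * Fp a b c d 1)) x = ff a b c d x ^ 1 * (ff a b c d x ^ 1 * ff a b c d x ^ 3)"
        by (simp add: poly_Fp[OF three])
      also have "\<dots> = ff a b c d x ^ 5" by (simp only: power_add[symmetric]) simp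
      finally show ?thesis .
    qed
    have degP5: "degree (Fp a b c d 0 * (Fp a b c d 0 * Fp a b c d 1)) < 6 * (card (UNIV::'a set) - 1)"
      using order.trans[OF degree_mult_le add_mono[OF dF0 order.trans[OF degree_mult_le add_mono[OF dF0 dF1]]]] card
      by simp
    have "(\<Sum>j\<in>{1..<6}. vl (j * 9) (Fp a b c d 0 * (Fp a b c d 0 * Fp a b c d 1)) 0 j) = 0"
      by (rule hermite_poly[OF bij _ _ polyP5 degP5 card]) (use card in simp_all)
    then have S5: "2 * (b * (c * d ^ 3)) + d * (d * c ^ 3) + (2 * (d * c ^ 3) + (a * (a * c ^ 3 + c * b ^ 3) + c * (a * b ^ 3)) + (c ^ 3 + 2 * (b * c))) = 0"
      unfolding k2_sums(2) .
    have "c ^ 3 * (a ^ 2 + (d + 1) ^ 2) = 0"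
      using S5 True by (simp add: algebra_simps power2_eq_square)
    then have h1: "a ^ 2 + (d + 1) ^ 2 = 0" using c by simp
    have "c ^ 4 = (a * d ^ 3 + c * c ^ 3 + (d * a ^ 3 + (a ^ 3 + a))) - a * (d + 1) * (a ^ 2 + (d + 1) ^ 2) + 3 * (a * d ^ 2 + a * d)"
      by (simp add: algebra_simps power2_eq_square power3_eq_cube power4_eq_xxxx)
    also have "\<dots> = 0" using S4 h1 three by simp
    finally show False using c by simp
  qed
qed

lemma case1:
  fixes a b c d :: "'a::{field,finite}"
  assumes bij: "bij (ff a b c d)" and card: "card (UNIV::'a set) = 3" and c: "c \<noteq> 0"
  shows False
proof -
  have three: "(3::'a) = 0" using three_zero[of 1] card by simp
  have polyP: "poly (Fp a b c d 0) x = ff a b c d x ^ 1" for x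
    by (simp add: poly_Fp[OF three])
  have degP: "degree (Fp a b c d 0) < 5 * (card (UNIV::'a set) - 1)"
    using degree_Fp[of a b c d 0] card by simp
  have "(\<Sum>j\<in>{1..<5}. vl (j * 3) (Fp a b c d 0) 0 j) = 0"
    by (rule hermite_poly[OF bij _ _ polyP degP card]) (use card in simp_all)
  moreover have "{1..<5::nat} = {1,2,3,4}" by auto
  ultimately have "c = 0"
    by (simp add: vl_Fp[where X=1, simplified] vl_one del: One_nat_def)
  then show False using c by simp
qed


theorem proposition4p3:
  fixes a b c d :: "'a :: {field, finite}" and k :: nat
  assumes "k \<ge> 1" and "card (UNIV :: 'a set) = 3 ^ k" and "a * c \<noteq> 0"
  shows "\<not> bij (\<lambda>x::'a. x ^ 9 + a * x ^ 5 + b * x ^ 3 + c * x ^ 2 + d * x)"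
proof
  assume B: "bij (\<lambda>x::'a. x ^ 9 + a * x ^ 5 + b * x ^ 3 + c * x ^ 2 + d * x)"
  have e: "(\<lambda>x::'a. x ^ 9 + a * x ^ 5 + b * x ^ 3 + c * x ^ 2 + d * x) = ff a b c d"
    by (rule ext) (simp add: ff_def)
  have bij: "bij (ff a b c d)" using B unfolding e .
  have a: "a \<noteq> 0" and c: "c \<noteq> 0" using assms(3) by auto
  consider "k = 1" | "k = 2" | "k \<ge> 3" using assms(1) by linarith
  then show False
  proof cases
    case 1
    then show False using case1[OF bij _ c] assms(2) by simp
  next
    case 2
    then show False using case2[OF bij _ a c] assms(2) by simp
  next
    case 3
    show False
    proof (cases "even k")
      case False
      then show False using caseA[OF bij assms(2) 3 a] c by simp
    next
      case ev: True
      show False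
      proof (cases "b = 0")
        case True
        have "k \<ge> 4" using 3 ev by presburger
        then show False using caseB[OF bij assms(2) _ ev a c True] by simp
      next
        case False
        then show False using caseA[OF bij assms(2) 3 a] ev by simp
      qed
    qed
  qed
qed

end
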